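(* Let $A$ be an additive poset and $a,b\in A$. Then $a$ covers $b$ if and only if $a+b$ is an atom of $A$ and $a+b\le a$.
   Context: An additive poset is a pair $(A,\le)$ where $A$ is an abelian group and $\le$ is a partial order on $A$ such that for all $a,b,c\in A$: $(\ast)$ if $b\le a$ and $c\le a$ then $b+c\le a$; $(\ast\ast)$ if $a\le b$ and $a\le c$ then $a\le a+b+c$. (Then $0$ is the least element.) An element $a$ covers $b$ if $b<a$ (i.e. $b\le a$, $b\ne a$) and there is no $c$ with $b<c<a$. An atom of $A$ is an element covering $0$, i.e. a nonzero $a$ whose tail $A_a=\{x\in A:x\le a\}$ equals $\{0,a\}$. *)

theory Defs
  imports Main
begin

definition additive_poset :: "('a::ab_group_add \<Rightarrow> 'a \<Rightarrow> bool) \<Rightarrow> bool" where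
  "additive_poset le \<longleftrightarrow>
     (\<forall>a. le a a) \<and>
     (\<forall>a b. le a b \<and> le b a \<longrightarrow> a = b) \<and>
     (\<forall>a b c. le a b \<and> le b c \<longrightarrow> le a c) \<and>
     (\<forall>a b c. le b a \<and> le c a \<longrightarrow> le (b + c) a) \<and>
     (\<forall>a b c. le a b \<and> le a c \<longrightarrow> le a (a + b + c))"

definition strict :: "('a \<Rightarrow> 'a \<Rightarrow> bool) \<Rightarrow> 'a \<Rightarrow> 'a \<Rightarrow> bool" where
  "strict le b a \<longleftrightarrow> le b a \<and> b \<noteq> a"

definition covers :: "('a \<Rightarrow> 'a \<Rightarrow> bool) \<Rightarrow> 'a \<Rightarrow> 'a \<Rightarrow> bool" where
  "covers le a b \<longleftrightarrow> strict le b a \<and> \<not> (\<exists>c. strict le b c \<and> strict le c a)"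

definition tail :: "('a \<Rightarrow> 'a \<Rightarrow> bool) \<Rightarrow> 'a \<Rightarrow> 'a set" where
  "tail le a = {x. le x a}"

definition atom :: "('a::zero \<Rightarrow> 'a \<Rightarrow> bool) \<Rightarrow> 'a \<Rightarrow> bool" where
  "atom le a \<longleftrightarrow> a \<noteq> 0 \<and> tail le a = {0, a}"

end

theory Submission
  imports Defs
begin

theorem lemma5p1:
  fixes le :: "'a::ab_group_add \<Rightarrow> 'a \<Rightarrow> bool" and a b :: 'a
  assumes "additive_poset le"
  shows "covers le a b \<longleftrightarrow> atom le (a + b) \<and> le (a + b) a"
proof -
  have refl: "\<And>x. le x x" and anti: "\<And>x y. le x y \<Longrightarrow> le y x \<Longrightarrow> x = y"
    and trans: "\<And>x y z. le x y \<Longrightarrow> le y z \<Longrightarrow> le x z"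
    and s1: "\<And>a b c. le b a \<Longrightarrow> le c a \<Longrightarrow> le (b + c) a"
    and s2: "\<And>a b c. le a b \<Longrightarrow> le a c \<Longrightarrow> le a (a + b + c)"
    using assms unfolding additive_poset_def by blast+
  have two: "\<And>x::'a. x + x = 0"
  proof -
    fix x
    have h1: "le (x+x) x" using s1 refl by blast
    have h2: "le x (x+x+x)" using s2 refl by blast
    have h3: "le (x+x+x) x" using s1[OF h1 refl] .
    have "x = x+x+x" using anti h2 h3 by blast
    then have "x = x + (x + x)" by (simp add: add.assoc)
    then have "x + 0 = x + (x + x)" by simp
    then have "0 = x + x" by (simp only: add_left_cancel)
    then show "x + x = 0" by (rule sym)
  qed
  have zero: "\<And>x::'a. le 0 x"
  proof -
    fix x :: 'a
    have "le (x + x) x" using s1[OF refl refl] .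
    thus "le 0 x" using two by simp
  qed
  have two': "\<And>x y::'a. x + (x + y) = y"
  proof -
    fix x y :: 'a
    have "x + (x + y) = (x + x) + y" by (simp add: add.assoc)
    thus "x + (x + y) = y" using two by simp
  qed
  show ?thesis
  proof
    assume c: "covers le a b"
    hence ba: "le b a" and nba: "b \<noteq> a"
      and nc: "\<not> (\<exists>c. strict le b c \<and> strict le c a)"
      unfolding covers_def strict_def by auto
    have aba: "le (a+b) a" using s1[OF refl ba] .
    have nz: "a + b \<noteq> 0" proof
      assume "a + b = 0"
      hence "a + (a + b) = a" by simp
      thus False using nba two' by simp
    qed
    have "tail le (a+b) = {0, a+b}"
    proof
      show "{0, a+b} \<subseteq> tail le (a+b)" using zero refl unfolding tail_def by auto
    next
      show "tail le (a+b) \<subseteq> {0, a+b}"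
      proof
        fix x assume "x \<in> tail le (a+b)"
        hence xab: "le x (a+b)" unfolding tail_def by auto
        have xa: "le x a" using trans[OF xab aba] .
        have "le x (x + (a+b) + a)" using s2[OF xab xa] .
        moreover have "x + (a+b) + a = x + b" by (simp add: add_ac two two')
        ultimately have xxb: "le x (x+b)" by simp
        have "le (x + (x+b)) (x+b)" using s1[OF xxb refl] .
        moreover have "x + (x+b) = b" by (simp add: add_ac two two')
        ultimately have bxb: "le b (x+b)" by simp
        have xba: "le (x+b) a" using s1[OF xa ba] .
        show "x \<in> {0, a+b}"
        proof (rule ccontr)
          assume "x \<notin> {0, a+b}"
          hence x0: "x \<noteq> 0" and xab2: "x \<noteq> a + b" by auto
          have "x + b \<noteq> b" using x0 by simp
          moreover have "x + b \<noteq> a"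
          proof
            assume "x + b = a"
            hence "x + b + b = a + b" by simp
            thus False using xab2 by (simp add: add.assoc two)
          qed
          ultimately show False using nc bxb xba unfolding strict_def by metis
        qed
      qed
    qed
    thus "atom le (a + b) \<and> le (a + b) a" using nz aba unfolding atom_def by auto
  next
    assume h: "atom le (a + b) \<and> le (a + b) a"
    hence aba: "le (a+b) a" and nz: "a + b \<noteq> 0" and t: "tail le (a+b) = {0, a+b}"
      unfolding atom_def by auto
    have "le (a + b + a) a" using s1[OF aba refl] .
    moreover have "a + b + a = b" by (simp add: add_ac two two')
    ultimately have ba: "le b a" by simp
    have nba: "b \<noteq> a" using nz two by (auto simp: add.commute)
    have "\<not> (\<exists>c. strict le b c \<and> strict le c a)"
    proof
      assume "\<exists>c. strict le b c \<and> strict le c a"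
      then obtain c where bc: "le b c" "b \<noteq> c" and ca: "le c a" "c \<noteq> a"
        unfolding strict_def by auto
      have "le (b+c) c" using s1[OF bc(1) refl] .
      moreover have "le (b+c) a" using s1[OF ba ca(1)] .
      ultimately have "le (b+c) ((b+c) + a + c)" using s2 by blast
      moreover have "(b+c) + a + c = a + b" by (simp add: add_ac two two')
      ultimately have "b + c \<in> tail le (a+b)" unfolding tail_def by simp
      hence "b + c = 0 \<or> b + c = a + b" using t by auto
      thus False proof
        assume "b + c = 0"
        hence "b + (b + c) = b" by simp
        thus False using bc(2) two' by simp
      next
        assume "b + c = a + b"
        hence "c = a" by (simp add: add.commute)
        thus False using ca(2) by simp
      qed
    qed
    thus "covers le a b" using ba nba unfolding covers_def strict_def by auto
  qed
qed

end
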